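(* For each fixed $d\in\mathbb{N}$, collinearity of three $d$-dimensional points with $n$-bit natural-number coordinates can be maintained in $\mathrm{DynFO}{+}\mathrm{ar}$ under changes of single bits.
   Context: Input: three points $p_1,p_2,p_3\in\mathbb{N}^d$ whose coordinates are $n$-bit numbers, encoded over a domain $[n]$ by relations recording which bits of which coordinates are $1$; a change flips a single bit of a single coordinate. The Boolean query asks whether $p_1,p_2,p_3$ lie on a common line. $\mathrm{FO}{+}\mathrm{ar}$: first-order logic with access to a linear order and compatible addition and multiplication on the domain, order-invariant. A query is in $\mathrm{DynFO}{+}\mathrm{ar}$ under a set of changes if there is a dynamic program, with auxiliary relations over the fixed domain and one $\mathrm{FO}{+}\mathrm{ar}$ update formula per change operation and auxiliary relation (evaluated on the old input and auxiliary structure, with the change parameters as free variables), which, starting from the empty input (all bits $0$) with empty auxiliary relations, has after every sequence of changes a query relation equal to the query answer on the current input. *)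

theory Defs
  imports "HOL-Analysis.Analysis"
begin

datatype 'r fo =
    Rel 'r "nat list"
  | Eq nat nat
  | Less nat nat
  | Plus nat nat nat
  | Times nat nat nat
  | Neg "'r fo"
  | Conj "'r fo" "'r fo"
  | Ex nat "'r fo"

fun sat :: "nat \<Rightarrow> ('r \<Rightarrow> nat list set) \<Rightarrow> 'r fo \<Rightarrow> (nat \<Rightarrow> nat) \<Rightarrow> bool" where
  "sat n I (Rel r xs) v = (map v xs \<in> I r)"
| "sat n I (Eq x y) v = (v x = v y)"
| "sat n I (Less x y) v = (v x < v y)"
| "sat n I (Plus x y z) v = (v x + v y = v z)"
| "sat n I (Times x y z) v = (v x * v y = v z)"
| "sat n I (Neg \<phi>) v = (\<not> sat n I \<phi> v)"
| "sat n I (Conj \<phi> \<psi>) v = (sat n I \<phi> v \<and> sat n I \<psi> v)"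
| "sat n I (Ex x \<phi>) v = (\<exists>a<n. sat n I \<phi> (v(x := a)))"

datatype pt = P1 | P2 | P3

text \<open>The input consists of unary relations, one for each (point, coordinate) pair, recording
  which bits (domain elements, bit k = element k, least significant bit = 0) are 1.
  The coordinate index type 'd is a finite type with CARD('d) = d.\<close>

type_synonym 'd input = "pt \<times> 'd \<Rightarrow> nat set"

definition coord :: "'d input \<Rightarrow> pt \<Rightarrow> 'd \<Rightarrow> nat" where
  "coord I p j = (\<Sum>k\<in>I (p, j). 2 ^ k)"

definition point :: "'d input \<Rightarrow> pt \<Rightarrow> real ^ 'd" where
  "point I p = (\<chi> j. real (coord I p j))"

type_synonym 'd change = "(pt \<times> 'd) \<times> nat"

definition flip :: "'d input \<Rightarrow> 'd change \<Rightarrow> 'd input" where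
  "flip I c = (case c of (s, a) \<Rightarrow> I(s := (if a \<in> I s then I s - {a} else insert a (I s))))"

text \<open>Auxiliary relation symbols are 0..<naux, symbol r has arity (arity r); symbol 0 is the
  0-ary query relation. The update formula upd s r for change operation "flip a bit of s"
  and auxiliary relation r is evaluated over the combined vocabulary (input symbols Inl,
  auxiliary symbols Inr) on the OLD structure; variable 0 is the change parameter a and
  variables 1..arity r are the components of the tuple being defined.\<close>

record 'd dynprog =
  naux :: nat
  arity :: "nat \<Rightarrow> nat"
  upd :: "pt \<times> 'd \<Rightarrow> nat \<Rightarrow> (pt \<times> 'd + nat) fo"

definition wf_prog :: "'d dynprog \<Rightarrow> bool" where
  "wf_prog P \<longleftrightarrow> 0 < naux P \<and> arity P 0 = 0"

type_synonym aux = "nat \<Rightarrow> nat list set"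

definition interp :: "'d input \<Rightarrow> aux \<Rightarrow> (pt \<times> 'd + nat) \<Rightarrow> nat list set" where
  "interp I A = (\<lambda>R. case R of Inl s \<Rightarrow> {[a] | a. a \<in> I s} | Inr r \<Rightarrow> A r)"

definition env :: "nat \<Rightarrow> nat list \<Rightarrow> nat \<Rightarrow> nat" where
  "env a t = (\<lambda>x. if x = 0 then a else if x \<le> length t then t ! (x - 1) else 0)"

definition step :: "nat \<Rightarrow> 'd dynprog \<Rightarrow> 'd input \<times> aux \<Rightarrow> 'd change \<Rightarrow> 'd input \<times> aux" where
  "step n P st c = (case st of (I, A) \<Rightarrow> case c of (s, a) \<Rightarrow>
     (flip I (s, a),
      \<lambda>r. if r < naux P then
             {t. length t = arity P r \<and> set t \<subseteq> {..<n} \<and>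
                 sat n (interp I A) (upd P s r) (env a t)}
           else {}))"

definition run :: "nat \<Rightarrow> 'd dynprog \<Rightarrow> 'd change list \<Rightarrow> 'd input \<times> aux" where
  "run n P cs = foldl (step n P) (\<lambda>_. {}, \<lambda>_. {}) cs"

definition maintains :: "'d dynprog \<Rightarrow> (nat \<Rightarrow> 'd input \<Rightarrow> bool) \<Rightarrow> bool" where
  "maintains P Q \<longleftrightarrow> (\<forall>n cs. cs \<noteq> [] \<and> (\<forall>c\<in>set cs. snd c < n) \<longrightarrow>
      ([] \<in> snd (run n P cs) 0 \<longleftrightarrow> Q n (fst (run n P cs))))"

definition in_DynFO_ar :: "(nat \<Rightarrow> 'd input \<Rightarrow> bool) \<Rightarrow> bool" where
  "in_DynFO_ar Q \<longleftrightarrow> (\<exists>P::'d dynprog. wf_prog P \<and> maintains P Q)"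

definition collinear_query :: "nat \<Rightarrow> ('d::finite) input \<Rightarrow> bool" where
  "collinear_query n I = collinear {point I P1, point I P2, point I P3}"

end

theory Submission
  imports Defs
begin


definition val :: "(nat \<Rightarrow> bool) \<Rightarrow> nat \<Rightarrow> int" where
  "val b M = (\<Sum>p<M. if b p then 2^p else 0)"

lemma val_0[simp]: "val b 0 = 0" by (simp add: val_def)
lemma val_Suc: "val b (Suc M) = val b M + (if b M then 2^M else 0)"
  by (simp add: val_def)

lemma val_ge0: "0 \<le> val b M"
  by (induction M) (auto simp: val_Suc)

lemma val_lt: "val b M < 2^M"
proof (induction M)
  case (Suc M)
  have "val b (Suc M) \<le> val b M + 2^M" by (simp add: val_Suc)
  moreover have "(2::int)^Suc M = 2^M + 2^M" by simp
  ultimately show ?case using Suc.IH by linarith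
qed simp

lemma val_cong: "(\<And>p. p < M \<Longrightarrow> b p = c p) \<Longrightarrow> val b M = val c M"
  unfolding val_def by (rule sum.cong) auto

definition xor3 :: "bool \<Rightarrow> bool \<Rightarrow> bool \<Rightarrow> bool" where
  "xor3 x y z = (x \<noteq> (y \<noteq> z))"
definition maj :: "bool \<Rightarrow> bool \<Rightarrow> bool \<Rightarrow> bool" where
  "maj x y z = ((x \<and> y) \<or> (x \<and> z) \<or> (y \<and> z))"

lemma full_adder:
  "val (\<lambda>p. xor3 (u p) (v p) (w p)) M + 2 * val (\<lambda>p. maj (u p) (v p) (w p)) M
   = val u M + val v M + val w M"
  by (induction M) (auto simp: val_Suc xor3_def maj_def)

definition shiftB :: "bool \<Rightarrow> (nat \<Rightarrow> bool) \<Rightarrow> nat \<Rightarrow> bool" where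
  "shiftB c m p = (if p = 0 then c else m (p - 1))"

lemma val_shiftB: "val (shiftB c m) (Suc M) = (if c then 1 else 0) + 2 * val m M"
  by (induction M) (auto simp: val_Suc shiftB_def)

lemma compress:
  assumes "0 < M"
  shows "(val (\<lambda>p. xor3 (u p) (v p) (w p)) M + val (shiftB c (\<lambda>p. maj (u p) (v p) (w p))) M) mod 2^M
   = (val u M + val v M + val w M + (if c then 1 else 0)) mod 2^M"
proof -
  obtain M' where M: "M = Suc M'" using assms by (cases M) auto
  let ?m = "\<lambda>p. maj (u p) (v p) (w p)"
  let ?x = "\<lambda>p. xor3 (u p) (v p) (w p)"
  define e :: int where "e = (if ?m M' then 1 else 0)"
  have "2 * val ?m M = 2 * val ?m M' + e * 2^M"
    by (simp add: M val_Suc e_def)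
  then have "val ?x M + val (shiftB c ?m) M = (val u M + val v M + val w M + (if c then 1 else 0)) + (- e) * 2^M"
    using full_adder[of u v w M] val_shiftB[of c ?m M'] unfolding M[symmetric]
    by (simp add: algebra_simps)
  then show ?thesis by (metis mod_mult_self1)
qed

lemma val_neg: "val (\<lambda>p. \<not> b p) M = 2^M - 1 - val b M"
  by (induction M) (auto simp: val_Suc)

lemma val_set: assumes "S \<subseteq> {..<M}" shows "val (\<lambda>p. p \<in> S) M = (\<Sum>k\<in>S. 2^k)"
proof -
  have "val (\<lambda>p. p \<in> S) M = (\<Sum>p\<in>{..<M} \<inter> S. 2^p)"
    unfolding val_def by (simp add: sum.inter_restrict[symmetric] if_distrib)
  also have "{..<M} \<inter> S = S" using assms by auto
  finally show ?thesis .
qed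

lemma val_shift:
  assumes "\<forall>l\<in>S. a + l < M" "finite S"
  shows "val (\<lambda>p. \<exists>l\<in>S. a + l = p) M = 2^a * (\<Sum>l\<in>S. 2^l)"
proof -
  have "(\<lambda>p. \<exists>l\<in>S. a + l = p) = (\<lambda>p. p \<in> (+) a ` S)" by auto
  then have "val (\<lambda>p. \<exists>l\<in>S. a + l = p) M = (\<Sum>k\<in>(+) a ` S. 2^k)"
    using val_set[of "(+) a ` S" M] assms by auto
  also have "\<dots> = (\<Sum>l\<in>S. 2^(a+l))"
    by (subst sum.reindex) (auto simp: inj_on_def)
  finally show ?thesis by (simp add: power_add sum_distrib_left)
qed





lemma allSuc: "(\<forall>q<Suc M. P q) = ((\<forall>q<M. P q) \<and> P M)"
  by (auto simp: less_Suc_eq)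

lemma zero_test_aux:
  "((val u M + val v M) mod 2^M = 0 \<longleftrightarrow> (\<forall>q<M. (u q \<noteq> v q) = (\<exists>r<q. u r \<or> v r))) \<and>
   ((\<forall>q<M. (u q \<noteq> v q) = (\<exists>r<q. u r \<or> v r)) \<longrightarrow>
      val u M + val v M = (if \<exists>r<M. u r \<or> v r then 2^M else 0))"
proof (induction M)
  case 0
  then show ?case by simp
next
  case (Suc M)
  define S where "S = val u M + val v M"
  have IH1: "S mod 2^M = 0 \<longleftrightarrow> (\<forall>q<M. (u q \<noteq> v q) = (\<exists>r<q. u r \<or> v r))"
    using conjunct1[OF Suc.IH] unfolding S_def .
  have IH2: "(\<forall>q<M. (u q \<noteq> v q) = (\<exists>r<q. u r \<or> v r)) \<Longrightarrow> S = (if \<exists>r<M. u r \<or> v r then 2^M else 0)"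
    using conjunct2[OF Suc.IH] unfolding S_def by (rule mp)
  define E :: int where "E = (if \<exists>r<M. u r \<or> v r then 1 else 0)"
  define uM :: int where "uM = (if u M then 1 else 0)"
  define vM :: int where "vM = (if v M then 1 else 0)"
  have S': "val u (Suc M) + val v (Suc M) = S + (uM + vM) * 2^M"
    by (simp add: S_def uM_def vM_def val_Suc algebra_simps)
  have ex_Suc: "(\<exists>r<Suc M. u r \<or> v r) = ((\<exists>r<M. u r \<or> v r) \<or> u M \<or> v M)"
    by (auto simp: less_Suc_eq)
  have allq: "(\<forall>q<Suc M. (u q \<noteq> v q) = (\<exists>r<q. u r \<or> v r)) =
     ((\<forall>q<M. (u q \<noteq> v q) = (\<exists>r<q. u r \<or> v r)) \<and> (u M \<noteq> v M) = (\<exists>r<M. u r \<or> v r))"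
    by (rule allSuc)
  have pM: "(2::int)^Suc M = 2 * 2^M" by simp
  have pos: "(0::int) < 2^M" by simp
  have key: "(u M \<noteq> v M) = (\<exists>r<M. u r \<or> v r) \<longleftrightarrow> (E + uM + vM = 0 \<or> E + uM + vM = 2)"
    by (simp add: E_def uM_def vM_def)
  have key2: "(E + uM + vM) mod 2 = 0 \<longleftrightarrow> (E + uM + vM = 0 \<or> E + uM + vM = 2)"
    by (simp add: E_def uM_def vM_def)
  show ?case
  proof (intro conjI impI)
    show "(val u (Suc M) + val v (Suc M)) mod 2 ^ Suc M = 0 \<longleftrightarrow>
          (\<forall>q<Suc M. (u q \<noteq> v q) = (\<exists>r<q. u r \<or> v r))"
    proof
      assume h: "(val u (Suc M) + val v (Suc M)) mod 2 ^ Suc M = 0"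
      then have "(S + (uM + vM) * 2^M) mod (2 * 2^M) = 0" using S' pM by simp
      then have "(2 * 2^M) dvd (S + (uM + vM) * 2^M)" by (simp add: dvd_eq_mod_eq_0)
      then obtain k where k: "S + (uM + vM) * 2^M = 2 * 2^M * k" by (rule dvdE)
      then have "S = 2^M * (2 * k - (uM + vM))" by (simp add: algebra_simps)
      then have "S mod 2^M = 0" by simp
      then have Z: "\<forall>q<M. (u q \<noteq> v q) = (\<exists>r<q. u r \<or> v r)" using IH1 by simp
      have SE: "S = E * 2^M" using IH2[OF Z] by (simp add: E_def)
      have "(E + uM + vM) * 2^M = (2 * k) * 2^M" using k SE by (simp add: algebra_simps)
      then have "E + uM + vM = 2 * k" using pos by simp
      then have "(E + uM + vM) mod 2 = 0" by simp
      then have X: "(u M \<noteq> v M) = (\<exists>r<M. u r \<or> v r)" by (rule iffD2[OF key, OF iffD1[OF key2]])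
      show "\<forall>q<Suc M. (u q \<noteq> v q) = (\<exists>r<q. u r \<or> v r)" by (rule iffD2[OF allq], rule conjI[OF Z X])
    next
      assume "\<forall>q<Suc M. (u q \<noteq> v q) = (\<exists>r<q. u r \<or> v r)"
      then have ZX: "(\<forall>q<M. (u q \<noteq> v q) = (\<exists>r<q. u r \<or> v r)) \<and> (u M \<noteq> v M) = (\<exists>r<M. u r \<or> v r)"
        by (rule iffD1[OF allq])
      note Z = ZX[THEN conjunct1] and X = ZX[THEN conjunct2]
      have SE: "S = E * 2^M" using IH2[OF Z] by (simp add: E_def)
      have "E + uM + vM = 0 \<or> E + uM + vM = 2" using iffD1[OF key X] .
      moreover have T: "val u (Suc M) + val v (Suc M) = (E + uM + vM) * 2^M"
        using S' SE by (simp add: algebra_simps)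
      ultimately show "(val u (Suc M) + val v (Suc M)) mod 2 ^ Suc M = 0"
        using pM T by (elim disjE) simp_all
    qed
  next
    assume "\<forall>q<Suc M. (u q \<noteq> v q) = (\<exists>r<q. u r \<or> v r)"
    then have ZX: "(\<forall>q<M. (u q \<noteq> v q) = (\<exists>r<q. u r \<or> v r)) \<and> (u M \<noteq> v M) = (\<exists>r<M. u r \<or> v r)"
      by (rule iffD1[OF allq])
    note Z = ZX[THEN conjunct1] and X = ZX[THEN conjunct2]
    have SE: "S = E * 2^M" using IH2[OF Z] by (simp add: E_def)
    have "E + uM + vM = 0 \<or> E + uM + vM = 2" using iffD1[OF key X] .
    moreover have "E + uM + vM = 0 \<longleftrightarrow> \<not> (\<exists>r<Suc M. u r \<or> v r)"
      using ex_Suc by (simp add: E_def uM_def vM_def)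
    moreover have T: "val u (Suc M) + val v (Suc M) = (E + uM + vM) * 2^M"
      using S' SE by (simp add: algebra_simps)
    ultimately show "val u (Suc M) + val v (Suc M) = (if \<exists>r<Suc M. u r \<or> v r then 2 ^ Suc M else 0)"
      using pM T by (elim disjE) simp_all
  qed
qed

lemma zero_test:
  "(val u M + val v M) mod 2^M = 0 \<longleftrightarrow> (\<forall>q<M. (u q \<noteq> v q) = (\<exists>r<q. u r \<or> v r))"
  by (rule conjunct1[OF zero_test_aux])



definition TT :: "'r fo" where "TT = Eq 0 0"
definition FF :: "'r fo" where "FF = Neg (Eq 0 0)"
definition Disj :: "'r fo \<Rightarrow> 'r fo \<Rightarrow> 'r fo" where "Disj a b = Neg (Conj (Neg a) (Neg b))"
definition Xor :: "'r fo \<Rightarrow> 'r fo \<Rightarrow> 'r fo" where "Xor a b = Disj (Conj a (Neg b)) (Conj (Neg a) b)"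
definition IfF :: "'r fo \<Rightarrow> 'r fo \<Rightarrow> 'r fo \<Rightarrow> 'r fo" where
  "IfF c a b = Disj (Conj c a) (Conj (Neg c) b)"

fun Conjs :: "'r fo list \<Rightarrow> 'r fo" where
  "Conjs [] = TT" | "Conjs (f # fs) = Conj f (Conjs fs)"
fun Disjs :: "'r fo list \<Rightarrow> 'r fo" where
  "Disjs [] = FF" | "Disjs (f # fs) = Disj f (Disjs fs)"

lemma sat_TT[simp]: "sat n J TT v" by (simp add: TT_def)
lemma sat_FF[simp]: "\<not> sat n J FF v" by (simp add: FF_def)
lemma sat_Disj[simp]: "sat n J (Disj a b) v = (sat n J a v \<or> sat n J b v)" by (simp add: Disj_def)
lemma sat_Xor[simp]: "sat n J (Xor a b) v = (sat n J a v \<noteq> sat n J b v)" by (auto simp add: Xor_def)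
lemma sat_IfF[simp]: "sat n J (IfF c a b) v = (if sat n J c v then sat n J a v else sat n J b v)"
  by (simp add: IfF_def)
lemma sat_Conjs[simp]: "sat n J (Conjs fs) v = (\<forall>f\<in>set fs. sat n J f v)" by (induction fs) auto
lemma sat_Disjs[simp]: "sat n J (Disjs fs) v = (\<exists>f\<in>set fs. sat n J f v)" by (induction fs) auto

definition SuccF :: "nat \<Rightarrow> nat \<Rightarrow> nat \<Rightarrow> 'r fo" where
  "SuccF y x z = Conj (Less y x) (Neg (Ex z (Conj (Less y z) (Less z x))))"
definition MinF :: "nat \<Rightarrow> nat \<Rightarrow> 'r fo" where "MinF x z = Neg (Ex z (Less z x))"
definition MaxF :: "nat \<Rightarrow> nat \<Rightarrow> 'r fo" where "MaxF x z = Neg (Ex z (Less x z))"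

lemma succ_aux: assumes "x' < (n::nat)" shows "(y' < x' \<and> \<not>(\<exists>z<n. y' < z \<and> z < x')) = (y' + 1 = x')"
proof
  assume h: "y' < x' \<and> \<not>(\<exists>z<n. y' < z \<and> z < x')"
  show "y' + 1 = x'"
  proof (rule ccontr)
    assume "y' + 1 \<noteq> x'"
    then have "Suc y' < x'" using h by auto
    then show False using h assms by (metis less_trans lessI)
  qed
qed auto

lemma sat_SuccF: "z \<noteq> y \<Longrightarrow> z \<noteq> x \<Longrightarrow> v x < n \<Longrightarrow> sat n J (SuccF y x z) v = (v y + 1 = v x)"
  unfolding SuccF_def using succ_aux[of "v x" n "v y"] by simp
lemma sat_MinF: "z \<noteq> x \<Longrightarrow> v x < n \<Longrightarrow> sat n J (MinF x z) v = (v x = 0)"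
  unfolding MinF_def by auto
lemma sat_MaxF: "z \<noteq> x \<Longrightarrow> v x < n \<Longrightarrow> sat n J (MaxF x z) v = (v x + 1 = n)"
  unfolding MaxF_def by (cases "Suc (v x) < n") auto

type_synonym 'r bf = "nat \<Rightarrow> nat \<Rightarrow> nat \<Rightarrow> 'r fo"

definition NT :: nat where "NT = 5"

definition ok :: "nat \<Rightarrow> ('r \<Rightarrow> nat list set) \<Rightarrow> 'r bf \<Rightarrow> (nat \<Rightarrow> nat \<Rightarrow> bool) \<Rightarrow> bool" where
  "ok n J F b \<longleftrightarrow> (\<forall>kb t x v. 0 < x \<longrightarrow> x < kb \<longrightarrow> t < NT \<longrightarrow> v x < n \<longrightarrow> v 0 < n \<longrightarrow>
      (sat n J (F kb t x) v \<longleftrightarrow> b (v 0) (t * n + v x)))"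

lemma okD: "ok n J F b \<Longrightarrow> 0 < x \<Longrightarrow> x < kb \<Longrightarrow> t < NT \<Longrightarrow> v x < n \<Longrightarrow> v 0 < n \<Longrightarrow>
      sat n J (F kb t x) v \<longleftrightarrow> b (v 0) (t * n + v x)"
  unfolding ok_def by blast

definition xorF :: "'r bf \<Rightarrow> 'r bf \<Rightarrow> 'r bf \<Rightarrow> 'r bf" where
  "xorF F G H = (\<lambda>kb t x. Xor (F kb t x) (Xor (G kb t x) (H kb t x)))"
definition majF :: "'r bf \<Rightarrow> 'r bf \<Rightarrow> 'r bf \<Rightarrow> 'r bf" where
  "majF F G H = (\<lambda>kb t x. Disj (Conj (F kb t x) (G kb t x))
      (Disj (Conj (F kb t x) (H kb t x)) (Conj (G kb t x) (H kb t x))))"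
definition negF :: "'r bf \<Rightarrow> 'r bf" where "negF F = (\<lambda>kb t x. Neg (F kb t x))"
definition ifBF :: "'r fo \<Rightarrow> 'r bf \<Rightarrow> 'r bf \<Rightarrow> 'r bf" where
  "ifBF c F G = (\<lambda>kb t x. IfF c (F kb t x) (G kb t x))"

lemma ok_xorF: "ok n J F f \<Longrightarrow> ok n J G g \<Longrightarrow> ok n J H h \<Longrightarrow>
  ok n J (xorF F G H) (\<lambda>a p. xor3 (f a p) (g a p) (h a p))"
  unfolding ok_def xorF_def xor3_def by simp

lemma ok_majF: "ok n J F f \<Longrightarrow> ok n J G g \<Longrightarrow> ok n J H h \<Longrightarrow>
  ok n J (majF F G H) (\<lambda>a p. maj (f a p) (g a p) (h a p))"
  unfolding ok_def majF_def maj_def by simp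

lemma ok_negF: "ok n J F f \<Longrightarrow> ok n J (negF F) (\<lambda>a p. \<not> f a p)"
  unfolding ok_def negF_def by simp

lemma ok_ifBF: "(\<And>v. sat n J c v = P (v 0)) \<Longrightarrow> ok n J F f \<Longrightarrow> ok n J G g \<Longrightarrow>
  ok n J (ifBF c F G) (\<lambda>a p. if P a then f a p else g a p)"
  unfolding ok_def ifBF_def by simp

definition shift1F :: "bool \<Rightarrow> 'r bf \<Rightarrow> 'r bf" where
  "shift1F c G = (\<lambda>kb t x.
     Disj (Ex kb (Conj (SuccF kb x (Suc kb)) (G (Suc kb) t kb)))
          (Conj (MinF x kb) (if t = 0 then (if c then TT else FF)
                             else Ex kb (Conj (MaxF kb (Suc kb)) (G (Suc kb) (t - 1) kb)))))"

lemma ok_shift1F: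
  assumes G: "ok n J G g"
  shows "ok n J (shift1F c G) (\<lambda>a. shiftB c (g a))"
  unfolding ok_def
proof (intro allI impI)
  fix kb t x :: nat and v :: "nat \<Rightarrow> nat"
  assume x0: "0 < x" and xk: "x < kb" and tN: "t < NT" and vx: "v x < n" and v0: "v 0 < n"
  have kx: "kb \<noteq> x" "Suc kb \<noteq> x" "kb \<noteq> 0" "Suc kb \<noteq> kb" using x0 xk by auto
  have inner: "sat n J (G (Suc kb) tt kb) (v(kb := y)) = g (v 0) (tt * n + y)" if "y < n" "tt < NT" for y tt
  proof -
    have "sat n J (G (Suc kb) tt kb) (v(kb := y)) = g ((v(kb := y)) 0) (tt * n + (v(kb := y)) kb)"
      using kx v0 that by (intro okD[OF G]) auto
    then show ?thesis using kx by simp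
  qed
  have A: "sat n J (Ex kb (Conj (SuccF kb x (Suc kb)) (G (Suc kb) t kb))) v
      = (\<exists>y<n. y + 1 = v x \<and> g (v 0) (t * n + y))"
    using kx vx tN by (auto simp: sat_SuccF inner)
  have B: "sat n J (MinF x kb) v = (v x = 0)" using kx vx by (simp add: sat_MinF)
  have C: "t \<noteq> 0 \<Longrightarrow> sat n J (Ex kb (Conj (MaxF kb (Suc kb)) (G (Suc kb) (t - 1) kb))) v
      = g (v 0) ((t - 1) * n + (n - 1))"
  proof -
    assume t0: "t \<noteq> 0"
    have mx: "sat n J (MaxF kb (Suc kb)) (v(kb := y)) = (y = n - 1)" if "y < n" for y
      using sat_MaxF[of "Suc kb" kb "v(kb := y)" n J] that by auto
    have t1: "t - 1 < NT" using tN by simp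
    have "sat n J (Ex kb (Conj (MaxF kb (Suc kb)) (G (Suc kb) (t - 1) kb))) v
       = (\<exists>y<n. y = n - 1 \<and> g (v 0) ((t - 1) * n + y))"
      using t1 by (auto simp: mx inner)
    also have "\<dots> = g (v 0) ((t - 1) * n + (n - 1))"
      using vx by auto
    finally show ?thesis .
  qed
  have main: "sat n J (shift1F c G kb t x) v =
     ((\<exists>y<n. y + 1 = v x \<and> g (v 0) (t * n + y)) \<or>
      (v x = 0 \<and> (if t = 0 then c else g (v 0) ((t - 1) * n + (n - 1)))))"
  proof (cases "t = 0")
    case True
    then show ?thesis unfolding shift1F_def sat_Disj sat.simps(7) A B by simp
  next
    case False
    then show ?thesis unfolding shift1F_def sat_Disj sat.simps(7) A B
      using C[OF False] by (simp del: sat.simps)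
  qed
  show "sat n J (shift1F c G kb t x) v = shiftB c (g (v 0)) (t * n + v x)"
  proof (cases "v x = 0")
    case True
    show ?thesis
    proof (cases "t = 0")
      case True
      then show ?thesis using \<open>v x = 0\<close> main by (simp add: shiftB_def)
    next
      case False
      have "t * n + v x - 1 = (t - 1) * n + (n - 1)" using False \<open>v x = 0\<close> vx
        by (cases t) (auto simp: algebra_simps)
      then show ?thesis using False \<open>v x = 0\<close> main vx by (simp add: shiftB_def)
    qed
  next
    case False
    have "(\<exists>y<n. y + 1 = v x \<and> g (v 0) (t * n + y)) = g (v 0) (t * n + v x - 1)"
    proof
      assume "\<exists>y<n. y + 1 = v x \<and> g (v 0) (t * n + y)"
      then obtain y where "y + 1 = v x" "g (v 0) (t * n + y)" by blast
      then show "g (v 0) (t * n + v x - 1)" by (metis add_diff_cancel_right' add.assoc)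
    next
      assume h: "g (v 0) (t * n + v x - 1)"
      have "v x - 1 < n" "v x - 1 + 1 = v x" "t * n + (v x - 1) = t * n + v x - 1" using False vx by auto
      then show "\<exists>y<n. y + 1 = v x \<and> g (v 0) (t * n + y)" using h by metis
    qed
    then show ?thesis using False main by (simp add: shiftB_def)
  qed
qed



lemma okE: "ok n J F f \<Longrightarrow> 0 < x \<Longrightarrow> x < kb \<Longrightarrow> t < NT \<Longrightarrow> y < n \<Longrightarrow> w 0 < n \<Longrightarrow>
   sat n J (F kb t x) (w(x := y)) = f (w 0) (t * n + y)"
  using okD[of n J F f x kb t "w(x := y)"] by simp

lemma interp_Inl[simp]: "interp I A (Inl s) = {[a] | a. a \<in> I s}" by (simp add: interp_def)
lemma interp_Inr[simp]: "interp I A (Inr r) = A r" by (simp add: interp_def)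

lemma sat_Inl[simp]: "sat n (interp I A) (Rel (Inl s) [y]) v = (v y \<in> I s)"
  by (auto simp: interp_def)
lemma sat_Inr[simp]: "sat n (interp I A) (Rel (Inr r) xs) v = (map v xs \<in> A r)"
  by (auto simp: interp_def)

definition HighF :: "nat \<Rightarrow> nat \<Rightarrow> nat \<Rightarrow> 'r fo" where
  "HighF l x k = Ex k (Conj (Plus x k 0) (Ex (Suc k) (Conj (SuccF (Suc k) k (Suc (Suc (Suc k))))
      (Ex (Suc (Suc k)) (Conj (MaxF (Suc (Suc k)) (Suc (Suc (Suc k)))) (Plus l (Suc k) (Suc (Suc k))))))))"

lemma max_aux: "(m::nat) < n \<Longrightarrow> (\<not>(\<exists>c<n. m < c)) = (m + 1 = n)"
  by (cases "Suc m < n") auto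

lemma high_arith:
  fixes a L X n :: nat
  assumes "a < n" "L < n" "X < n"
  shows "(\<exists>w<n. X + w = a \<and> (\<exists>w'<n. (w' < w \<and> \<not>(\<exists>c<n. w' < c \<and> c < w)) \<and>
            (\<exists>m<n. \<not>(\<exists>c<n. m < c) \<and> L + w' = m))) \<longleftrightarrow> a + L = n + X"
proof
  assume "\<exists>w<n. X + w = a \<and> (\<exists>w'<n. (w' < w \<and> \<not>(\<exists>c<n. w' < c \<and> c < w)) \<and>
            (\<exists>m<n. \<not>(\<exists>c<n. m < c) \<and> L + w' = m))"
  then obtain w w' m where w: "w < n" "X + w = a" and w': "w' < n" "w' < w \<and> \<not>(\<exists>c<n. w' < c \<and> c < w)"
     and m: "m < n" "\<not>(\<exists>c<n. m < c)" "L + w' = m" by blast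
  have "w' + 1 = w" using succ_aux[of w n w'] w w' by simp
  moreover have "m + 1 = n" using max_aux[of m n] m by simp
  ultimately show "a + L = n + X" using w m by simp
next
  assume h: "a + L = n + X"
  define w where "w = a - X"
  define w' where "w' = a - X - 1"
  define m where "m = n - 1"
  have w: "w < n" "X + w = a" "w' + 1 = w" "w' < n" using h assms by (auto simp: w_def w'_def)
  have m: "m < n" "m + 1 = n" "L + w' = m" using h assms by (auto simp: m_def w'_def)
  have "w' < w \<and> \<not>(\<exists>c<n. w' < c \<and> c < w)" using succ_aux[of w n w'] w by simp
  moreover have "\<not>(\<exists>c<n. m < c)" using max_aux[of m n] m by simp
  ultimately show "\<exists>w<n. X + w = a \<and> (\<exists>w'<n. (w' < w \<and> \<not>(\<exists>c<n. w' < c \<and> c < w)) \<and>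
            (\<exists>m<n. \<not>(\<exists>c<n. m < c) \<and> L + w' = m))" using w m by blast
qed

lemma sat_HighF:
  assumes "0 < l" "l < k" "0 < x" "x < k" "v 0 < n" "v l < n" "v x < n"
  shows "sat n J (HighF l x k) v \<longleftrightarrow> v 0 + v l = n + v x"
proof -
  have d: "k \<noteq> 0" "k \<noteq> l" "k \<noteq> x" "Suc k \<noteq> l" "Suc k \<noteq> x" "Suc (Suc k) \<noteq> l" "Suc (Suc k) \<noteq> x"
    using assms by auto
  have "sat n J (HighF l x k) v \<longleftrightarrow> (\<exists>w<n. v x + w = v 0 \<and> (\<exists>w'<n. (w' < w \<and> \<not>(\<exists>c<n. w' < c \<and> c < w)) \<and>
            (\<exists>m<n. \<not>(\<exists>c<n. m < c) \<and> v l + w' = m)))"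
    unfolding HighF_def SuccF_def MaxF_def using d by simp
  also have "\<dots> \<longleftrightarrow> v 0 + v l = n + v x" by (rule high_arith[OF assms(5,6,7)])
  finally show ?thesis .
qed


definition shY :: "'c \<Rightarrow> ('c + nat) bf" where
  "shY s = (\<lambda>kb t x. if t = 0 then Ex kb (Conj (Rel (Inl s) [kb]) (Plus 0 kb x))
     else if t = 1 then Ex kb (Conj (Rel (Inl s) [kb]) (HighF kb x (Suc kb))) else FF)"

lemma ok_shY:
  assumes S: "I s \<subseteq> {..<n}"
  shows "ok n (interp I A) (shY s) (\<lambda>a p. \<exists>l\<in>I s. a + l = p)"
  unfolding ok_def
proof (intro allI impI)
  fix kb t x :: nat and v :: "nat \<Rightarrow> nat"
  assume x0: "0 < x" and xk: "x < kb" and tN: "t < NT" and vx: "v x < n" and v0: "v 0 < n"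
  have kx: "kb \<noteq> x" "kb \<noteq> 0" using x0 xk by auto
  show "sat n (interp I A) (shY s kb t x) v = (\<exists>l\<in>I s. v 0 + l = t * n + v x)"
  proof (cases "t = 0")
    case True
    then show ?thesis using kx S by (auto simp: shY_def)
  next
    case False
    show ?thesis
    proof (cases "t = 1")
      case True
      have h: "sat n (interp I A) (HighF kb x (Suc kb)) (v(kb := l)) = (v 0 + l = n + v x)" if "l < n" for l
        using sat_HighF[of kb "Suc kb" x "v(kb := l)" n "interp I A"] that x0 xk kx vx v0 by simp
      have "sat n (interp I A) (shY s kb t x) v = (\<exists>l<n. l \<in> I s \<and> sat n (interp I A) (HighF kb x (Suc kb)) (v(kb := l)))"
        using True by (simp add: shY_def)
      also have "\<dots> = (\<exists>l\<in>I s. v 0 + l = n + v x)"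
      proof
        assume "\<exists>l<n. l \<in> I s \<and> sat n (interp I A) (HighF kb x (Suc kb)) (v(kb := l))"
        then show "\<exists>l\<in>I s. v 0 + l = n + v x" using h by blast
      next
        assume "\<exists>l\<in>I s. v 0 + l = n + v x"
        then obtain l where "l \<in> I s" "v 0 + l = n + v x" by blast
        moreover have "l < n" using S \<open>l \<in> I s\<close> by auto
        ultimately show "\<exists>l<n. l \<in> I s \<and> sat n (interp I A) (HighF kb x (Suc kb)) (v(kb := l))"
          using h by blast
      qed
      finally show ?thesis using True by simp
    next
      case False
      have "\<not> (v 0 + l = t * n + v x)" if "l < n" for l
      proof -
        have "2 * n \<le> t * n" using \<open>t \<noteq> 0\<close> False by (intro mult_right_mono) auto
        then show ?thesis using that v0 by linarith
      qed
      then show ?thesis using False \<open>t \<noteq> 0\<close> S by (auto simp: shY_def)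
    qed
  qed
qed

definition stF :: "(nat \<Rightarrow> nat) \<Rightarrow> ('c + nat) bf" where
  "stF R = (\<lambda>kb t x. Rel (Inr (R t)) [x])"

lemma ok_stF: "ok n (interp I A) (stF R) (\<lambda>a p. [p mod n] \<in> A (R (p div n)))"
  unfolding ok_def stF_def by auto

definition wB :: "nat \<Rightarrow> nat set \<Rightarrow> bool \<Rightarrow> nat \<Rightarrow> bool" where
  "wB a S ad p = (if ad then (\<exists>l\<in>S. a + l = p) else \<not> (\<exists>l\<in>S. a + l = p))"

fun chainF :: "(bool \<times> 'c) list \<Rightarrow> ('c + nat) bf \<times> ('c + nat) bf \<Rightarrow> ('c + nat) bf \<times> ('c + nat) bf" where
  "chainF [] UV = UV"
| "chainF ((ad, c) # ts) (U, V) =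
     (let W = (if ad then shY c else negF (shY c)) in chainF ts (xorF U V W, shift1F (\<not> ad) (majF U V W)))"

fun chainB :: "nat \<Rightarrow> ('c \<Rightarrow> nat set) \<Rightarrow> (bool \<times> 'c) list \<Rightarrow> (nat \<Rightarrow> bool) \<times> (nat \<Rightarrow> bool) \<Rightarrow> (nat \<Rightarrow> bool) \<times> (nat \<Rightarrow> bool)" where
  "chainB a I [] uv = uv"
| "chainB a I ((ad, c) # ts) (u, v) =
     chainB a I ts (\<lambda>p. xor3 (u p) (v p) (wB a (I c) ad p), shiftB (\<not> ad) (\<lambda>p. maj (u p) (v p) (wB a (I c) ad p)))"

lemma ok_W:
  assumes "I c \<subseteq> {..<n}"
  shows "ok n (interp I A) (if ad then shY c else negF (shY c)) (\<lambda>a. wB a (I c) ad)"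
  using ok_shY[of I c n A, OF assms] ok_negF[OF ok_shY[of I c n A, OF assms]]
  by (cases ad) (simp_all add: wB_def[abs_def])

lemma ok_chain:
  assumes S: "\<forall>c. I c \<subseteq> {..<n}"
  shows "ok n (interp I A) U u \<Longrightarrow> ok n (interp I A) V v \<Longrightarrow>
    ok n (interp I A) (fst (chainF ts (U, V))) (\<lambda>a. fst (chainB a I ts (u a, v a))) \<and>
    ok n (interp I A) (snd (chainF ts (U, V))) (\<lambda>a. snd (chainB a I ts (u a, v a)))"
proof (induction ts arbitrary: U V u v)
  case Nil
  then show ?case by simp
next
  case (Cons tc ts)
  obtain ad c where tc: "tc = (ad, c)" by (cases tc)
  let ?W = "if ad then shY c else negF (shY c)"
  have W: "ok n (interp I A) ?W (\<lambda>a. wB a (I c) ad)" using ok_W S by blast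
  have X: "ok n (interp I A) (xorF U V ?W) (\<lambda>a p. xor3 (u a p) (v a p) (wB a (I c) ad p))"
    by (rule ok_xorF[OF Cons.prems W])
  have M: "ok n (interp I A) (shift1F (\<not> ad) (majF U V ?W)) (\<lambda>a. shiftB (\<not> ad) (\<lambda>p. maj (u a p) (v a p) (wB a (I c) ad p)))"
    by (rule ok_shift1F[OF ok_majF[OF Cons.prems W]])
  show ?case using Cons.IH[OF X M] by (simp add: tc Let_def)
qed



definition XI :: "('c \<Rightarrow> nat set) \<Rightarrow> 'c \<Rightarrow> int" where "XI I c = (\<Sum>k\<in>I c. 2^k)"

lemma NT_pos: "0 < NT" by (simp add: NT_def)

lemma val_W:
  assumes S: "I c \<subseteq> {..<n}" and a: "a < n" and n: "0 < n"
  shows "(val (wB a (I c) ad) (NT * n) + (if \<not> ad then 1 else 0)) mod 2^(NT*n)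
       = ((if ad then 1 else -1) * 2^a * XI I c) mod 2^(NT*n)"
proof -
  have fin: "finite (I c)" using S finite_subset by blast
  have lt: "\<forall>l\<in>I c. a + l < NT * n"
  proof
    fix l assume "l \<in> I c"
    then have "l < n" using S by auto
    moreover have "2 * n \<le> NT * n" by (simp add: NT_def)
    ultimately show "a + l < NT * n" using a by linarith
  qed
  have sh: "val (\<lambda>p. \<exists>l\<in>I c. a + l = p) (NT * n) = 2^a * XI I c"
    using val_shift[OF lt fin] by (simp add: XI_def)
  show ?thesis
  proof (cases ad)
    case True
    then show ?thesis using sh by (simp add: wB_def[abs_def])
  next
    case False
    have "val (wB a (I c) ad) (NT * n) = 2^(NT*n) - 1 - 2^a * XI I c"
      using False val_neg[of "\<lambda>p. \<exists>l\<in>I c. a + l = p" "NT * n"] sh by (simp add: wB_def[abs_def])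
    then have "val (wB a (I c) ad) (NT * n) + 1 = (- (2^a * XI I c)) + 1 * 2^(NT*n)" by simp
    then show ?thesis using False by (simp only: mod_mult_self1) simp
  qed
qed

lemma chain_val:
  assumes S: "\<forall>c. I c \<subseteq> {..<n}" and a: "a < n" and n: "0 < n"
  shows "(val (fst (chainB a I ts (u, v))) (NT*n) + val (snd (chainB a I ts (u, v))) (NT*n)) mod 2^(NT*n)
     = (val u (NT*n) + val v (NT*n) + (\<Sum>(ad, c)\<leftarrow>ts. (if ad then 1 else -1) * 2^a * XI I c)) mod 2^(NT*n)"
proof (induction ts arbitrary: u v)
  case Nil
  then show ?case by simp
next
  case (Cons tc ts)
  obtain ad c where tc: "tc = (ad, c)" by (cases tc)
  let ?M = "NT * n"
  let ?w = "wB a (I c) ad"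
  let ?u = "\<lambda>p. xor3 (u p) (v p) (?w p)"
  let ?v = "shiftB (\<not> ad) (\<lambda>p. maj (u p) (v p) (?w p))"
  let ?S = "(\<Sum>(ad, c)\<leftarrow>ts. (if ad then 1 else -1) * 2^a * XI I c)"
  have M0: "0 < ?M" using n NT_pos by simp
  have c1: "(val ?u ?M + val ?v ?M) mod 2^?M = (val u ?M + val v ?M + val ?w ?M + (if \<not> ad then 1 else 0)) mod 2^?M"
    by (rule compress[OF M0])
  have c2: "(val ?w ?M + (if \<not> ad then 1 else 0)) mod 2^?M = ((if ad then 1 else -1) * 2^a * XI I c) mod 2^?M"
    by (rule val_W[of I c n a ad, OF spec[OF S, of c] a n])
  have "(val (fst (chainB a I (tc # ts) (u, v))) ?M + val (snd (chainB a I (tc # ts) (u, v))) ?M) mod 2^?M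
      = (val ?u ?M + val ?v ?M + ?S) mod 2^?M"
    using Cons.IH[of ?u ?v] by (simp add: tc)
  also have "\<dots> = (val u ?M + val v ?M + (val ?w ?M + (if \<not> ad then 1 else 0)) + ?S) mod 2^?M"
    using mod_add_cong[OF c1, of ?S ?S] by (simp add: algebra_simps)
  also have "\<dots> = (val u ?M + val v ?M + ((if ad then 1 else -1) * 2^a * XI I c) + ?S) mod 2^?M"
    using mod_add_cong[OF mod_add_cong[OF refl c2, of "val u ?M + val v ?M"], of ?S ?S] by simp
  finally show ?case by (simp add: tc algebra_simps)
qed


lemma ball_map_upt: "(\<forall>f\<in>set (map g [0..<N]). P f) = (\<forall>t<N. P (g t))" by auto
lemma bex_map_upt: "(\<exists>f\<in>set (map g [0..<N]). P f) = (\<exists>t<N. P (g t))" by auto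

lemma all_pos: "(\<forall>q<NT*n. P q) \<longleftrightarrow> (\<forall>t<NT. \<forall>k<n. P (t*n+k))"
proof
  assume h: "\<forall>q<NT*n. P q"
  show "\<forall>t<NT. \<forall>k<n. P (t*n+k)"
  proof (intro allI impI)
    fix t k assume "t < NT" "k < n"
    moreover have "Suc t * n \<le> NT * n" using \<open>t < NT\<close> by (intro mult_right_mono) auto
    ultimately have "t * n + k < NT * n" by simp
    then show "P (t*n+k)" using h by blast
  qed
next
  assume h: "\<forall>t<NT. \<forall>k<n. P (t*n+k)"
  show "\<forall>q<NT*n. P q"
  proof (intro allI impI)
    fix q assume q: "q < NT * n"
    then have n: "0 < n" by (cases n) auto
    have "q div n < NT" using div_less_iff_less_mult[OF n, of q NT] q by (simp add: mult.commute)
    moreover have "q mod n < n" using n by simp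
    ultimately have "P (q div n * n + q mod n)" using h by blast
    then show "P q" by simp
  qed
qed

lemma ex_below:
  assumes "k < (n::nat)"
  shows "(\<exists>r<t*n+k. Q r) \<longleftrightarrow> ((\<exists>t'<t. \<exists>y<n. Q (t'*n+y)) \<or> (\<exists>y<k. Q (t*n+y)))"
proof
  assume "\<exists>r<t*n+k. Q r"
  then obtain r where r: "r < t*n+k" "Q r" by blast
  have n: "0 < n" using assms by simp
  have rr: "r = r div n * n + r mod n" by simp
  show "(\<exists>t'<t. \<exists>y<n. Q (t'*n+y)) \<or> (\<exists>y<k. Q (t*n+y))"
  proof (cases "r div n < t")
    case True
    then show ?thesis using r rr n by (metis mod_less_divisor)
  next
    case False
    have "r div n \<le> t"
    proof -
      have "r < Suc t * n" using r assms by simp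
      then have "r div n < Suc t" using div_less_iff_less_mult[OF n, of r "Suc t"] by simp
      then show ?thesis by simp
    qed
    then have "r div n = t" using False by simp
    then have "t * n + r mod n = r" using div_mult_mod_eq[of r n] by simp
    then have "r mod n < k" using r by linarith
    then show ?thesis using r rr \<open>r div n = t\<close> by metis
  qed
next
  assume "(\<exists>t'<t. \<exists>y<n. Q (t'*n+y)) \<or> (\<exists>y<k. Q (t*n+y))"
  then show "\<exists>r<t*n+k. Q r"
  proof
    assume "\<exists>t'<t. \<exists>y<n. Q (t'*n+y)"
    then obtain t' y where "t' < t" "y < n" "Q (t'*n+y)" by blast
    moreover have "t' * n + y < t * n + k"
    proof -
      have "Suc t' * n \<le> t * n" using \<open>t' < t\<close> by (intro mult_right_mono) auto
      then show ?thesis using \<open>y < n\<close> by simp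
    qed
    ultimately show ?thesis by blast
  next
    assume "\<exists>y<k. Q (t*n+y)"
    then obtain y where "y < k" "Q (t*n+y)" by blast
    then show ?thesis by (intro exI[of _ "t*n+y"]) auto
  qed
qed

definition LowF :: "'r bf \<Rightarrow> 'r bf \<Rightarrow> nat \<Rightarrow> nat \<Rightarrow> 'r fo" where
  "LowF U V kb t = Disj
     (Disjs (map (\<lambda>t'. Ex (Suc kb) (Disj (U (Suc (Suc kb)) t' (Suc kb)) (V (Suc (Suc kb)) t' (Suc kb)))) [0..<t]))
     (Ex (Suc kb) (Conj (Less (Suc kb) kb) (Disj (U (Suc (Suc kb)) t (Suc kb)) (V (Suc (Suc kb)) t (Suc kb)))))"

definition ZF :: "'r bf \<Rightarrow> 'r bf \<Rightarrow> nat \<Rightarrow> 'r fo" where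
  "ZF U V kb = Conjs (map (\<lambda>t. Neg (Ex kb (Xor (Xor (U (Suc kb) t kb) (V (Suc kb) t kb)) (LowF U V kb t)))) [0..<NT])"

lemma sat_LowF:
  assumes U: "ok n J U u" and V: "ok n J V v" and kb: "0 < kb" and t: "t < NT" and w0: "w 0 < n" and wk: "w kb < n"
  shows "sat n J (LowF U V kb t) w =
    ((\<exists>t'<t. \<exists>y<n. u (w 0) (t'*n+y) \<or> v (w 0) (t'*n+y)) \<or> (\<exists>y<w kb. u (w 0) (t*n+y) \<or> v (w 0) (t*n+y)))"
proof -
  have eU: "sat n J (U (Suc (Suc kb)) t' (Suc kb)) (w(Suc kb := y)) = u (w 0) (t'*n+y)"
    and eV: "sat n J (V (Suc (Suc kb)) t' (Suc kb)) (w(Suc kb := y)) = v (w 0) (t'*n+y)"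
    if "t' < NT" "y < n" for t' y
    using okE[OF U, of "Suc kb" "Suc (Suc kb)" t' y w] okE[OF V, of "Suc kb" "Suc (Suc kb)" t' y w] that w0 by auto
  have A: "(\<exists>f\<in>set (map (\<lambda>t'. Ex (Suc kb) (Disj (U (Suc (Suc kb)) t' (Suc kb)) (V (Suc (Suc kb)) t' (Suc kb)))) [0..<t]). sat n J f w)
     = (\<exists>t'<t. \<exists>y<n. u (w 0) (t'*n+y) \<or> v (w 0) (t'*n+y))"
  proof -
    have e: "sat n J (Ex (Suc kb) (Disj (U (Suc (Suc kb)) t' (Suc kb)) (V (Suc (Suc kb)) t' (Suc kb)))) w
       = (\<exists>y<n. u (w 0) (t'*n+y) \<or> v (w 0) (t'*n+y))" if "t' < t" for t'
    proof -
      have "t' < NT" using that t by simp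
      then show ?thesis using eU eV by auto
    qed
    have "(\<exists>f\<in>set (map (\<lambda>t'. Ex (Suc kb) (Disj (U (Suc (Suc kb)) t' (Suc kb)) (V (Suc (Suc kb)) t' (Suc kb)))) [0..<t]). sat n J f w)
      = (\<exists>t'<t. sat n J (Ex (Suc kb) (Disj (U (Suc (Suc kb)) t' (Suc kb)) (V (Suc (Suc kb)) t' (Suc kb)))) w)"
      by (simp only: bex_map_upt)
    also have "\<dots> = (\<exists>t'<t. \<exists>y<n. u (w 0) (t'*n+y) \<or> v (w 0) (t'*n+y))"
      using e by blast
    finally show ?thesis .
  qed
  have B: "sat n J (Ex (Suc kb) (Conj (Less (Suc kb) kb) (Disj (U (Suc (Suc kb)) t (Suc kb)) (V (Suc (Suc kb)) t (Suc kb))))) w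
     = (\<exists>y<w kb. u (w 0) (t*n+y) \<or> v (w 0) (t*n+y))"
  proof -
    have eUt: "sat n J (U (Suc (Suc kb)) t (Suc kb)) (w(Suc kb := y)) = u (w 0) (t*n+y)"
      and eVt: "sat n J (V (Suc (Suc kb)) t (Suc kb)) (w(Suc kb := y)) = v (w 0) (t*n+y)" if "y < n" for y
      using eU eV t that by auto
    show ?thesis
    proof
      assume "sat n J (Ex (Suc kb) (Conj (Less (Suc kb) kb) (Disj (U (Suc (Suc kb)) t (Suc kb)) (V (Suc (Suc kb)) t (Suc kb))))) w"
      then obtain y where "y < n" "y < w kb" "sat n J (U (Suc (Suc kb)) t (Suc kb)) (w(Suc kb := y)) \<or>
          sat n J (V (Suc (Suc kb)) t (Suc kb)) (w(Suc kb := y))" using kb by auto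
      then show "\<exists>y<w kb. u (w 0) (t*n+y) \<or> v (w 0) (t*n+y)" using eUt eVt by blast
    next
      assume "\<exists>y<w kb. u (w 0) (t*n+y) \<or> v (w 0) (t*n+y)"
      then obtain y where y: "y < w kb" "u (w 0) (t*n+y) \<or> v (w 0) (t*n+y)" by blast
      then have "y < n" using wk by simp
      then show "sat n J (Ex (Suc kb) (Conj (Less (Suc kb) kb) (Disj (U (Suc (Suc kb)) t (Suc kb)) (V (Suc (Suc kb)) t (Suc kb))))) w"
        using y eUt eVt kb by auto
    qed
  qed
  show ?thesis unfolding LowF_def sat_Disj sat_Disjs A B ..
qed

lemma gen_allex: "(\<And>t k. t < N \<Longrightarrow> k < m \<Longrightarrow> (\<not> S t k) = R t k) \<Longrightarrow>
   (\<forall>t<N. \<not> (\<exists>k<m. S t k)) = (\<forall>t<N. \<forall>k<m. R t k)"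
  by blast

lemma sat_ZF:
  assumes U: "ok n J U u" and V: "ok n J V v" and kb: "0 < kb" and w0: "w 0 < n"
  shows "sat n J (ZF U V kb) w \<longleftrightarrow> (\<forall>q<NT*n. (u (w 0) q \<noteq> v (w 0) q) = (\<exists>r<q. u (w 0) r \<or> v (w 0) r))"
proof -
  let ?a = "w 0"
  have inner: "(\<not> sat n J (Xor (Xor (U (Suc kb) t kb) (V (Suc kb) t kb)) (LowF U V kb t)) (w(kb := k)))
     = ((u ?a (t*n+k) \<noteq> v ?a (t*n+k)) = ((\<exists>t'<t. \<exists>y<n. u ?a (t'*n+y) \<or> v ?a (t'*n+y)) \<or> (\<exists>y<k. u ?a (t*n+y) \<or> v ?a (t*n+y))))"
    if "t < NT" "k < n" for t k
  proof -
    have "sat n J (U (Suc kb) t kb) (w(kb := k)) = u ?a (t*n+k)"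
      using okE[OF U, of kb "Suc kb" t k w] that kb w0 by simp
    moreover have "sat n J (V (Suc kb) t kb) (w(kb := k)) = v ?a (t*n+k)"
      using okE[OF V, of kb "Suc kb" t k w] that kb w0 by simp
    moreover have "sat n J (LowF U V kb t) (w(kb := k)) =
       ((\<exists>t'<t. \<exists>y<n. u ?a (t'*n+y) \<or> v ?a (t'*n+y)) \<or> (\<exists>y<k. u ?a (t*n+y) \<or> v ?a (t*n+y)))"
      using sat_LowF[OF U V kb that(1), of "w(kb := k)"] that kb w0 by simp
    ultimately show ?thesis by simp
  qed
  have "sat n J (ZF U V kb) w \<longleftrightarrow> (\<forall>t<NT. \<forall>k<n.
     (u ?a (t*n+k) \<noteq> v ?a (t*n+k)) = ((\<exists>t'<t. \<exists>y<n. u ?a (t'*n+y) \<or> v ?a (t'*n+y)) \<or> (\<exists>y<k. u ?a (t*n+y) \<or> v ?a (t*n+y))))"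
  proof -
    have "sat n J (ZF U V kb) w \<longleftrightarrow> (\<forall>t<NT. \<not> (\<exists>k<n. sat n J (Xor (Xor (U (Suc kb) t kb) (V (Suc kb) t kb)) (LowF U V kb t)) (w(kb := k))))"
      unfolding ZF_def sat_Conjs ball_map_upt by simp
    also have "\<dots> \<longleftrightarrow> (\<forall>t<NT. \<forall>k<n.
     (u ?a (t*n+k) \<noteq> v ?a (t*n+k)) = ((\<exists>t'<t. \<exists>y<n. u ?a (t'*n+y) \<or> v ?a (t'*n+y)) \<or> (\<exists>y<k. u ?a (t*n+y) \<or> v ?a (t*n+y))))"
      by (rule gen_allex[OF inner])
    finally show ?thesis .
  qed
  also have "\<dots> \<longleftrightarrow> (\<forall>t<NT. \<forall>k<n. (u ?a (t*n+k) \<noteq> v ?a (t*n+k)) = (\<exists>r<t*n+k. u ?a r \<or> v ?a r))"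
    using ex_below[of _ n _ "\<lambda>r. u ?a r \<or> v ?a r", symmetric] by simp
  also have "\<dots> \<longleftrightarrow> (\<forall>q<NT*n. (u ?a q \<noteq> v ?a q) = (\<exists>r<q. u ?a r \<or> v ?a r))"
    by (rule all_pos[symmetric])
  finally show ?thesis .
qed



definition monoms :: "'d \<Rightarrow> 'd \<Rightarrow> (int \<times> (pt \<times> 'd) \<times> (pt \<times> 'd)) list" where
  "monoms i j = [(1,(P2,i),(P3,j)), (1,(P1,j),(P3,i)), (1,(P2,j),(P1,i)),
               (-1,(P2,j),(P3,i)), (-1,(P2,i),(P1,j)), (-1,(P1,i),(P3,j))]"

definition Dv :: "('c \<Rightarrow> int) \<Rightarrow> (int \<times> 'c \<times> 'c) list \<Rightarrow> int" where
  "Dv x ms = (\<Sum>(\<sigma>, c1, c2)\<leftarrow>ms. \<sigma> * x c1 * x c2)"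

definition termsL :: "'c \<Rightarrow> (int \<times> 'c \<times> 'c) list \<Rightarrow> (int \<times> 'c) list" where
  "termsL s ms = concat (map (\<lambda>(\<sigma>, c1, c2). (if c1 = s then [(\<sigma>, c2)] else []) @ (if c2 = s then [(\<sigma>, c1)] else [])) ms)"

lemma Dv_update:
  assumes "\<forall>(\<sigma>, c1, c2)\<in>set ms. c1 \<noteq> c2" "\<forall>c. c \<noteq> s \<longrightarrow> x' c = x c" "x' s = x s + \<delta>"
  shows "Dv x' ms = Dv x ms + \<delta> * (\<Sum>(\<sigma>, c)\<leftarrow>termsL s ms. \<sigma> * x c)"
  using assms(1)
proof (induction ms)
  case Nil
  then show ?case by (simp add: Dv_def termsL_def)
next
  case (Cons m ms)
  obtain \<sigma> c1 c2 where m: "m = (\<sigma>, c1, c2)" by (cases m) auto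
  have ne: "c1 \<noteq> c2" using Cons.prems m by auto
  have IH: "Dv x' ms = Dv x ms + \<delta> * (\<Sum>(\<sigma>, c)\<leftarrow>termsL s ms. \<sigma> * x c)" using Cons by auto
  have "\<sigma> * x' c1 * x' c2 = \<sigma> * x c1 * x c2 + \<delta> * (\<Sum>(\<sigma>', c)\<leftarrow>(if c1 = s then [(\<sigma>, c2)] else []) @ (if c2 = s then [(\<sigma>, c1)] else []). \<sigma>' * x c)"
    using ne assms(2,3) by (cases "c1 = s"; cases "c2 = s") (auto simp: algebra_simps)
  then show ?case using IH by (simp add: Dv_def termsL_def m algebra_simps)
qed

lemma termsL_sign:
  assumes "\<forall>(\<sigma>, c1, c2)\<in>set ms. \<sigma> = 1 \<or> \<sigma> = -1"
  shows "\<forall>(\<sigma>, c)\<in>set (termsL s ms). \<sigma> = 1 \<or> \<sigma> = -1"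
  using assms by (induction ms) (auto simp: termsL_def split: if_splits)

definition adl :: "bool \<Rightarrow> (int \<times> 'c) list \<Rightarrow> (bool \<times> 'c) list" where
  "adl inS ts = map (\<lambda>(\<sigma>, c). ((\<sigma> = 1) \<noteq> inS, c)) ts"

lemma sum_adl:
  assumes "\<forall>(\<sigma>, c)\<in>set ts. \<sigma> = 1 \<or> \<sigma> = -1"
  shows "(\<Sum>(ad, c)\<leftarrow>adl inS ts. (if ad then 1 else -1) * (2::int)^a * X c)
       = (if inS then -(2^a) else 2^a) * (\<Sum>(\<sigma>, c)\<leftarrow>ts. \<sigma> * X c)"
  using assms by (induction ts) (auto simp: adl_def algebra_simps)

lemma mono_ne: "\<forall>(\<sigma>, c1, c2)\<in>set (monoms i j). c1 \<noteq> c2"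
  by (simp add: monoms_def)
lemma mono_sign: "\<forall>(\<sigma>, c1, c2)\<in>set (monoms i j). \<sigma> = 1 \<or> \<sigma> = -1"
  by (simp add: monoms_def)

lemma flip_eq: "flip I (s, a) = I(s := (if a \<in> I s then I s - {a} else insert a (I s)))"
  by (simp add: flip_def)

lemma XI_flip:
  assumes "finite (I s)"
  shows "XI (flip I (s, a)) s = XI I s + (if a \<in> I s then -(2^a) else 2^a)"
    and "c \<noteq> s \<Longrightarrow> XI (flip I (s, a)) c = XI I c"
proof -
  show "XI (flip I (s, a)) s = XI I s + (if a \<in> I s then -(2^a) else 2^a)"
  proof (cases "a \<in> I s")
    case True
    then show ?thesis using assms by (simp add: flip_eq XI_def sum_diff1)
  next
    case False
    then show ?thesis using assms by (simp add: flip_eq XI_def)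
  qed
  show "c \<noteq> s \<Longrightarrow> XI (flip I (s, a)) c = XI I c" by (simp add: flip_eq XI_def)
qed

lemma coord_XI: "int (coord I p j) = XI I (p, j)"
  by (simp add: coord_def XI_def)

lemma collinear_vec:
  fixes A B C :: "real ^ 'n"
  shows "collinear {A, B, C} \<longleftrightarrow> (\<forall>i j. (B - A) $ i * (C - A) $ j = (B - A) $ j * (C - A) $ i)"
proof -
  have "collinear {A, B, C} \<longleftrightarrow> collinear {B, A, C}" by (simp add: insert_commute)
  also have "\<dots> \<longleftrightarrow> collinear {0, B - A, C - A}" by (rule collinear_3) (simp add: NO_MATCH_def)
  also have "\<dots> \<longleftrightarrow> (B - A = 0 \<or> C - A = 0 \<or> (\<exists>c. C - A = c *\<^sub>R (B - A)))" by (rule collinear_lemma)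
  also have "\<dots> \<longleftrightarrow> (\<forall>i j. (B - A) $ i * (C - A) $ j = (B - A) $ j * (C - A) $ i)"
  proof -
    define e where "e = B - A"
    define f where "f = C - A"
    have "(e = 0 \<or> f = 0 \<or> (\<exists>c. f = c *\<^sub>R e)) \<longleftrightarrow> (\<forall>i j. e $ i * f $ j = e $ j * f $ i)"
    proof
      assume "e = 0 \<or> f = 0 \<or> (\<exists>c. f = c *\<^sub>R e)"
      then show "\<forall>i j. e $ i * f $ j = e $ j * f $ i" by auto
    next
      assume h: "\<forall>i j. e $ i * f $ j = e $ j * f $ i"
      show "e = 0 \<or> f = 0 \<or> (\<exists>c. f = c *\<^sub>R e)"
      proof (cases "e = 0")
        case False
        then obtain i where i: "e $ i \<noteq> 0" by (auto simp: vec_eq_iff)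
        have "f = (f $ i / e $ i) *\<^sub>R e"
          unfolding vec_eq_iff
        proof
          fix j
          have "e $ i * f $ j = e $ j * f $ i" using h by blast
          then show "f $ j = ((f $ i / e $ i) *\<^sub>R e) $ j" using i by (simp add: field_simps)
        qed
        then show ?thesis by blast
      qed simp
    qed
    then show ?thesis by (simp add: e_def f_def)
  qed
  finally show ?thesis .
qed

lemma collinear_iff_Dv:
  "collinear_query n I \<longleftrightarrow> (\<forall>i j. Dv (XI I) (monoms i j) = 0)"
proof -
  have pt: "point I p $ i = real_of_int (XI I (p, i))" for p i
    by (simp add: point_def coord_XI[symmetric])
  have "(point I P2 - point I P1) $ i * (point I P3 - point I P1) $ j
        = (point I P2 - point I P1) $ j * (point I P3 - point I P1) $ i
     \<longleftrightarrow> Dv (XI I) (monoms i j) = 0" for i j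
  proof -
    have "real_of_int (Dv (XI I) (monoms i j)) =
      (point I P2 - point I P1) $ i * (point I P3 - point I P1) $ j
        - (point I P2 - point I P1) $ j * (point I P3 - point I P1) $ i"
      by (simp add: Dv_def monoms_def pt algebra_simps)
    then show ?thesis by (metis eq_iff_diff_eq_0 of_int_eq_0_iff)
  qed
  then show ?thesis unfolding collinear_query_def collinear_vec by simp
qed



definition ix :: "'d::finite \<Rightarrow> nat" where
  "ix = (SOME h. bij_betw h (UNIV::'d set) {0..<CARD('d)})"

lemma ix_bij: "bij_betw (ix::'d::finite \<Rightarrow> nat) UNIV {0..<CARD('d)}"
proof -
  have "\<exists>h. bij_betw h (UNIV::'d set) {0..<CARD('d)}" using ex_bij_betw_finite_nat[of "UNIV::'d set"] by simp
  then show ?thesis unfolding ix_def by (rule someI_ex)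
qed

lemma ix_lt: "ix (i::'d::finite) < CARD('d)"
  using ix_bij[where 'd='d] by (auto simp: bij_betw_def)
lemma ix_inj: "inj (ix::'d::finite \<Rightarrow> nat)"
  using ix_bij[where 'd='d] by (auto simp: bij_betw_def)
lemma inv_ix[simp]: "inv ix (ix (i::'d::finite)) = i"
  by (rule inv_f_f[OF ix_inj])

definition idx :: "nat \<Rightarrow> 'd::finite \<Rightarrow> 'd \<Rightarrow> nat \<Rightarrow> nat" where
  "idx w i j t = Suc (w + 2 * t + 2 * NT * (ix i * CARD('d) + ix j))"

lemma dm: "(b::nat) < m \<Longrightarrow> (b + m * k) div m = k \<and> (b + m * k) mod m = b"
  by simp

lemma decode:
  fixes i j :: "'d::finite"
  assumes w: "w < 2" and t: "t < NT"
  shows "(idx w i j t - 1) mod 2 = w"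
    and "((idx w i j t - 1) div 2) mod NT = t"
    and "inv ix (((idx w i j t - 1) div (2 * NT)) div CARD('d)) = i"
    and "inv ix (((idx w i j t - 1) div (2 * NT)) mod CARD('d)) = j"
proof -
  define E where "E = ix i * CARD('d) + ix j"
  have q: "idx w i j t - 1 = w + 2 * (t + NT * E)" by (simp add: idx_def E_def algebra_simps)
  show "(idx w i j t - 1) mod 2 = w" unfolding q using dm[of w 2 "t + NT * E"] w by blast
  have "(idx w i j t - 1) div 2 = t + NT * E" using q w dm[of w 2 "t + NT * E"] by simp
  then show "((idx w i j t - 1) div 2) mod NT = t" using t dm[of t NT E] by simp
  have wt: "w + 2 * t < 2 * NT" using w t by simp
  have q2: "idx w i j t - 1 = (w + 2 * t) + (2 * NT) * E" using q by (simp add: algebra_simps)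
  have e: "(idx w i j t - 1) div (2 * NT) = E" using dm[OF wt, of E] q2 by simp
  have E2: "E = ix j + CARD('d) * ix i" by (simp add: E_def algebra_simps)
  have "E div CARD('d) = ix i" "E mod CARD('d) = ix j" using dm[OF ix_lt[of j], of "ix i"] E2 by auto
  then show "inv ix (((idx w i j t - 1) div (2 * NT)) div CARD('d)) = i"
    and "inv ix (((idx w i j t - 1) div (2 * NT)) mod CARD('d)) = j" using e by simp_all
qed

lemma idx_pos: "idx w i j t \<noteq> 0" by (simp add: idx_def)

lemma idx_lt:
  fixes i j :: "'d::finite"
  assumes w: "w < 2" and t: "t < NT"
  shows "idx w i j t < Suc (2 * NT * CARD('d) * CARD('d))"
proof -
  have C: "0 < CARD('d)" by simp
  have "ix i * CARD('d) + ix j \<le> (CARD('d) - 1) * CARD('d) + (CARD('d) - 1)"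
    using ix_lt[of i] ix_lt[of j] by (intro add_mono mult_right_mono) auto
  also have "\<dots> = CARD('d) * CARD('d) - 1" using C by (cases "CARD('d)") (auto simp: algebra_simps)
  moreover have "0 < CARD('d) * CARD('d)" using C by simp
  ultimately have E: "ix i * CARD('d) + ix j + 1 \<le> CARD('d) * CARD('d)" by linarith
  have "w + 2 * t + 1 \<le> 2 * NT" using w t by simp
  then have "w + 2 * t + 2 * NT * (ix i * CARD('d) + ix j) + 1 \<le> 2 * NT * (ix i * CARD('d) + ix j + 1)"
    by (simp add: algebra_simps)
  also have "\<dots> \<le> 2 * NT * (CARD('d) * CARD('d))" using E by (intro mult_left_mono) auto
  finally show ?thesis by (simp add: idx_def algebra_simps)
qed



definition UVF :: "pt \<times> 'd::finite \<Rightarrow> 'd \<Rightarrow> 'd \<Rightarrow> (pt \<times> 'd + nat) bf \<times> (pt \<times> 'd + nat) bf" where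
  "UVF s i j = (let st = (stF (idx 0 i j), stF (idx 1 i j));
      R1 = chainF (adl True (termsL s (monoms i j))) st;
      R0 = chainF (adl False (termsL s (monoms i j))) st
   in (ifBF (Rel (Inl s) [0]) (fst R1) (fst R0), ifBF (Rel (Inl s) [0]) (snd R1) (snd R0)))"

definition elems :: "'d::finite list" where "elems = (SOME xs. set xs = UNIV)"

lemma set_elems: "set (elems :: 'd::finite list) = UNIV"
proof -
  have "\<exists>xs. set xs = (UNIV :: 'd set)" by (rule finite_list) simp
  then show ?thesis unfolding elems_def by (rule someI_ex)
qed

definition pairsL :: "('d::finite \<times> 'd) list" where
  "pairsL = filter (\<lambda>(i, j). i \<noteq> j) (List.product elems elems)"

lemma set_pairsL: "set (pairsL :: ('d::finite \<times> 'd) list) = {(i, j). i \<noteq> j}"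
  by (auto simp: pairsL_def set_elems)

definition QF :: "pt \<times> 'd::finite \<Rightarrow> (pt \<times> 'd + nat) fo" where
  "QF s = Conjs (map (\<lambda>(i, j). ZF (fst (UVF s i j)) (snd (UVF s i j)) 1) pairsL)"

definition updF :: "pt \<times> 'd::finite \<Rightarrow> nat \<Rightarrow> (pt \<times> 'd + nat) fo" where
  "updF s r = (if r = 0 then QF s else
     (let q = r - 1; w = q mod 2; t = (q div 2) mod NT; e = q div (2 * NT);
          i = inv ix (e div CARD('d)); j = inv ix (e mod CARD('d))
      in if i = j then FF else (if w = 0 then fst (UVF s i j) else snd (UVF s i j)) 2 t 1))"

definition prog :: "'d::finite dynprog" where
  "prog = \<lparr>naux = Suc (2 * NT * CARD('d) * CARD('d)), arity = (\<lambda>r. if r = 0 then 0 else 1), upd = updF\<rparr>"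

lemma wf_prog: "wf_prog (prog :: 'd::finite dynprog)"
  by (simp add: wf_prog_def prog_def)

lemma updF_idx:
  fixes i j :: "'d::finite"
  assumes "w < 2" "t < NT" "i \<noteq> j"
  shows "updF s (idx w i j t) = (if w = 0 then fst (UVF s i j) else snd (UVF s i j)) 2 t 1"
proof (cases "w = 0")
  case True
  then show ?thesis using decode[of 0 t i j] assms idx_pos[of 0 i j t] by (simp add: updF_def Let_def)
next
  case False
  then have "w = 1" using assms by simp
  then show ?thesis using decode[of 1 t i j] assms idx_pos[of 1 i j t] by (simp add: updF_def Let_def)
qed

definition bitsA :: "nat \<Rightarrow> aux \<Rightarrow> nat \<Rightarrow> 'd::finite \<Rightarrow> 'd \<Rightarrow> nat \<Rightarrow> bool" where
  "bitsA n A w i j p = ([p mod n] \<in> A (idx w i j (p div n)))"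

definition Inv :: "nat \<Rightarrow> 'd::finite input \<times> aux \<Rightarrow> bool" where
  "Inv n st = (case st of (I, A) \<Rightarrow> (\<forall>c. I c \<subseteq> {..<n}) \<and>
     (\<forall>i j. i \<noteq> j \<longrightarrow> (val (bitsA n A 0 i j) (NT * n) + val (bitsA n A 1 i j) (NT * n)) mod 2^(NT * n)
        = Dv (XI I) (monoms i j) mod 2^(NT * n)))"


lemma ok_cong: "ok n J F f \<Longrightarrow> f = g \<Longrightarrow> ok n J F g" by simp

lemma ok_UVF:
  fixes I :: "'d::finite input"
  assumes S: "\<forall>c. I c \<subseteq> {..<n}"
  shows "ok n (interp I A) (fst (UVF s i j))
           (\<lambda>a. fst (chainB a I (adl (a \<in> I s) (termsL s (monoms i j))) (bitsA n A 0 i j, bitsA n A 1 i j)))"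
    and "ok n (interp I A) (snd (UVF s i j))
           (\<lambda>a. snd (chainB a I (adl (a \<in> I s) (termsL s (monoms i j))) (bitsA n A 0 i j, bitsA n A 1 i j)))"
proof -
  have st: "ok n (interp I A) (stF (idx w i j)) (\<lambda>a. bitsA n A w i j)" for w
    using ok_stF[of n I A "idx w i j"] by (simp add: bitsA_def[abs_def])
  note C1 = ok_chain[OF S st st, of "adl True (termsL s (monoms i j))"]
  note C0 = ok_chain[OF S st st, of "adl False (termsL s (monoms i j))"]
  have c: "\<And>v. sat n (interp I A) (Rel (Inl s) [0]) v = (v 0 \<in> I s)" by simp
  show "ok n (interp I A) (fst (UVF s i j))
           (\<lambda>a. fst (chainB a I (adl (a \<in> I s) (termsL s (monoms i j))) (bitsA n A 0 i j, bitsA n A 1 i j)))"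
    unfolding UVF_def Let_def fst_conv
    by (rule ok_cong[OF ok_ifBF[OF c conjunct1[OF C1] conjunct1[OF C0]]]) (intro ext, simp)
  show "ok n (interp I A) (snd (UVF s i j))
           (\<lambda>a. snd (chainB a I (adl (a \<in> I s) (termsL s (monoms i j))) (bitsA n A 0 i j, bitsA n A 1 i j)))"
    unfolding UVF_def Let_def snd_conv
    by (rule ok_cong[OF ok_ifBF[OF c conjunct2[OF C1] conjunct2[OF C0]]]) (intro ext, simp)
qed

lemma XI_bounds:
  assumes "I c \<subseteq> {..<n}"
  shows "0 \<le> XI I c" "XI I c < 2^n"
proof -
  have "XI I c = val (\<lambda>p. p \<in> I c) n" using val_set[OF assms] by (simp add: XI_def)
  then show "0 \<le> XI I c" "XI I c < 2^n" using val_ge0 val_lt by metis+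
qed

lemma prod_bound: "0 \<le> (x::int) \<Longrightarrow> x < B \<Longrightarrow> 0 \<le> y \<Longrightarrow> y < B \<Longrightarrow> 0 \<le> x * y \<and> x * y < B * B"
  by (simp add: mult_strict_mono)

lemma Dv_bound:
  fixes I :: "'d::finite input"
  assumes S: "\<forall>c. I c \<subseteq> {..<n}" and n: "0 < n"
  shows "\<bar>Dv (XI I) (monoms i j)\<bar> < 2^(NT * n)"
proof -
  let ?B = "(2::int)^n"
  have b: "0 \<le> XI I c \<and> XI I c < ?B" for c using XI_bounds[of I c n, OF spec[OF S, of c]] by simp
  have p: "0 \<le> XI I c1 * XI I c2 \<and> XI I c1 * XI I c2 < ?B * ?B" for c1 c2
    using prod_bound b[of c1] b[of c2] by blast
  have "\<bar>Dv (XI I) (monoms i j)\<bar> < 3 * (?B * ?B)"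
    using p[of "(P2,i)" "(P3,j)"] p[of "(P1,j)" "(P3,i)"] p[of "(P2,j)" "(P1,i)"]
      p[of "(P2,j)" "(P3,i)"] p[of "(P2,i)" "(P1,j)"] p[of "(P1,i)" "(P3,j)"]
    by (simp add: Dv_def monoms_def abs_less_iff)
  also have "\<dots> \<le> 2^(NT * n)"
  proof -
    have "(8::int) \<le> 2^(3*n)"
    proof -
      have "(2::int)^3 \<le> 2^(3*n)" using n by (intro power_increasing) auto
      then show ?thesis by simp
    qed
    then have "3 * (?B * ?B) \<le> 2^(3*n) * (?B * ?B)" by simp
    also have "\<dots> = 2^(NT * n)" by (simp add: NT_def power_add[symmetric] algebra_simps)
    finally show ?thesis .
  qed
  finally show ?thesis .
qed

lemma zero_from_mod: "\<bar>x::int\<bar> < m \<Longrightarrow> x mod m = 0 \<Longrightarrow> x = 0"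
proof (rule ccontr)
  assume h: "\<bar>x\<bar> < m" "x mod m = 0" "x \<noteq> 0"
  then have "m dvd x" by (simp add: dvd_eq_mod_eq_0)
  then have "\<bar>m\<bar> \<le> \<bar>x\<bar>" using h(3) by (rule dvd_imp_le_int[rotated])
  then show False using h(1) by simp
qed

lemma Dv_diag: "Dv x (monoms i i) = 0"
  by (simp add: Dv_def monoms_def algebra_simps)



lemma flip_sub:
  assumes "\<forall>c. I c \<subseteq> {..<n}" "a < n"
  shows "\<forall>c. flip I (s, a) c \<subseteq> {..<n}"
  using assms by (auto simp: flip_eq)

lemma step_eq:
  "step n P (I, A) (s, a) = (flip I (s, a), \<lambda>r. if r < naux P then
     {t. length t = arity P r \<and> set t \<subseteq> {..<n} \<and> sat n (interp I A) (upd P s r) (env a t)} else {})"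
  by (simp add: step_def)

lemma key_arith:
  fixes I :: "'d::finite input"
  assumes S: "\<forall>c. I c \<subseteq> {..<n}" and a: "a < n" and ij: "i \<noteq> j"
    and inv: "(val (bitsA n A 0 i j) (NT * n) + val (bitsA n A 1 i j) (NT * n)) mod 2^(NT * n)
        = Dv (XI I) (monoms i j) mod 2^(NT * n)"
  shows "(val (fst (chainB a I (adl (a \<in> I s) (termsL s (monoms i j))) (bitsA n A 0 i j, bitsA n A 1 i j))) (NT * n)
        + val (snd (chainB a I (adl (a \<in> I s) (termsL s (monoms i j))) (bitsA n A 0 i j, bitsA n A 1 i j))) (NT * n))
        mod 2^(NT * n) = Dv (XI (flip I (s, a))) (monoms i j) mod 2^(NT * n)"
proof -
  have n: "0 < n" using a by simp
  define \<delta> :: int where "\<delta> = (if a \<in> I s then -(2^a) else 2^a)"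
  define T where "T = (\<Sum>(\<sigma>, c)\<leftarrow>termsL s (monoms i j). \<sigma> * XI I c)"
  have fin: "finite (I s)" using S finite_subset by blast
  have sadl: "(\<Sum>(ad, c)\<leftarrow>adl (a \<in> I s) (termsL s (monoms i j)). (if ad then 1 else -1) * 2^a * XI I c) = \<delta> * T"
    unfolding \<delta>_def T_def by (rule sum_adl[OF termsL_sign[OF mono_sign]])
  have D: "Dv (XI (flip I (s, a))) (monoms i j) = Dv (XI I) (monoms i j) + \<delta> * T"
    unfolding T_def
    by (rule Dv_update[OF mono_ne]) (auto simp: XI_flip[of I s, OF fin] \<delta>_def)
  have "(val (fst (chainB a I (adl (a \<in> I s) (termsL s (monoms i j))) (bitsA n A 0 i j, bitsA n A 1 i j))) (NT * n)
        + val (snd (chainB a I (adl (a \<in> I s) (termsL s (monoms i j))) (bitsA n A 0 i j, bitsA n A 1 i j))) (NT * n))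
        mod 2^(NT * n) = (val (bitsA n A 0 i j) (NT * n) + val (bitsA n A 1 i j) (NT * n) + \<delta> * T) mod 2^(NT * n)"
    using chain_val[OF S a n] sadl by simp
  also have "\<dots> = (Dv (XI I) (monoms i j) + \<delta> * T) mod 2^(NT * n)"
    by (rule mod_add_cong[OF inv refl])
  finally show ?thesis using D by simp
qed


lemma step_lemma:
  fixes I :: "'d::finite input"
  assumes inv: "Inv n (I, A)" and a: "a < n"
  shows "Inv n (step n prog (I, A) (s, a))"
    and "[] \<in> snd (step n prog (I, A) (s, a)) 0 \<longleftrightarrow> collinear_query n (fst (step n prog (I, A) (s, a)))"
proof -
  have n: "0 < n" using a by simp
  have S: "\<forall>c. I c \<subseteq> {..<n}" using inv by (simp add: Inv_def)
  have S': "\<forall>c. flip I (s, a) c \<subseteq> {..<n}" by (rule flip_sub[OF S a])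
  let ?M = "NT * n"
  let ?J = "interp I A"
  let ?A' = "snd (step n prog (I, A) (s, a))"
  define CB where "CB i j = chainB a I (adl (a \<in> I s) (termsL s (monoms i j))) (bitsA n A 0 i j, bitsA n A 1 i j)" for i j :: 'd
  have fstst: "fst (step n prog (I, A) (s, a)) = flip I (s, a)" by (simp add: step_eq)
  have bits': "bitsA n ?A' w i j p = (if w = 0 then fst (CB i j) p else snd (CB i j) p)"
    if w: "w < 2" and ij: "i \<noteq> j" and p: "p < ?M" for w i j p
  proof -
    have t: "p div n < NT" using p n by (simp add: div_less_iff_less_mult mult.commute)
    have k: "p mod n < n" using n by simp
    have lt: "idx w i j (p div n) < naux (prog :: 'd dynprog)"
      using idx_lt[OF w t, of i j] by (simp add: prog_def)
    have ar: "arity (prog :: 'd dynprog) (idx w i j (p div n)) = 1" using idx_pos by (simp add: prog_def)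
    have "bitsA n ?A' w i j p = sat n ?J (updF s (idx w i j (p div n))) (env a [p mod n])"
      using lt ar k by (simp add: bitsA_def step_eq prog_def)
    also have "\<dots> = sat n ?J ((if w = 0 then fst (UVF s i j) else snd (UVF s i j)) 2 (p div n) 1) (env a [p mod n])"
      by (simp add: updF_idx[OF w t ij])
    also have "\<dots> = (if w = 0 then fst (CB i j) p else snd (CB i j) p)"
    proof -
      have e0: "env a [p mod n] 0 = a" and e1: "env a [p mod n] 1 = p mod n" by (simp_all add: env_def)
      have "sat n ?J (fst (UVF s i j) 2 (p div n) 1) (env a [p mod n]) = fst (CB i j) (p div n * n + p mod n)"
        using okD[OF ok_UVF(1)[OF S, of A s i j], of 1 2 "p div n" "env a [p mod n]"] t k a e0 e1
        by (simp add: CB_def)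
      moreover have "sat n ?J (snd (UVF s i j) 2 (p div n) 1) (env a [p mod n]) = snd (CB i j) (p div n * n + p mod n)"
        using okD[OF ok_UVF(2)[OF S, of A s i j], of 1 2 "p div n" "env a [p mod n]"] t k a e0 e1
        by (simp add: CB_def)
      ultimately show ?thesis by simp
    qed
    finally show ?thesis .
  qed
  have arith: "(val (fst (CB i j)) ?M + val (snd (CB i j)) ?M) mod 2^?M = Dv (XI (flip I (s, a))) (monoms i j) mod 2^?M"
    if ij: "i \<noteq> j" for i j
  proof -
    have "(val (bitsA n A 0 i j) ?M + val (bitsA n A 1 i j) ?M) mod 2^?M = Dv (XI I) (monoms i j) mod 2^?M"
      using inv ij by (simp add: Inv_def)
    then show ?thesis unfolding CB_def by (rule key_arith[OF S a ij])
  qed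
  have vals: "val (bitsA n ?A' 0 i j) ?M = val (fst (CB i j)) ?M" "val (bitsA n ?A' 1 i j) ?M = val (snd (CB i j)) ?M"
    if ij: "i \<noteq> j" for i j
    using bits'[of 0 i j] bits'[of 1 i j] ij by (auto intro!: val_cong)
  show "Inv n (step n prog (I, A) (s, a))"
  proof -
    have "(\<forall>c. fst (step n prog (I, A) (s, a)) c \<subseteq> {..<n})" using S' fstst by simp
    moreover have "\<forall>i j. i \<noteq> j \<longrightarrow> (val (bitsA n ?A' 0 i j) ?M + val (bitsA n ?A' 1 i j) ?M) mod 2^?M
        = Dv (XI (fst (step n prog (I, A) (s, a)))) (monoms i j) mod 2^?M"
      using vals arith fstst by simp
    ultimately show ?thesis unfolding Inv_def by (simp add: case_prod_beta)
  qed
  have q0: "[] \<in> ?A' 0 \<longleftrightarrow> sat n ?J (QF s) (env a [])"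
    by (simp add: step_eq prog_def updF_def)
  also have "\<dots> \<longleftrightarrow> (\<forall>i j. i \<noteq> j \<longrightarrow> sat n ?J (ZF (fst (UVF s i j)) (snd (UVF s i j)) 1) (env a []))"
    by (auto simp: QF_def set_pairsL simp del: sat.simps)
  also have "\<dots> \<longleftrightarrow> (\<forall>i j. i \<noteq> j \<longrightarrow> (val (fst (CB i j)) ?M + val (snd (CB i j)) ?M) mod 2^?M = 0)"
  proof -
    have "sat n ?J (ZF (fst (UVF s i j)) (snd (UVF s i j)) 1) (env a []) \<longleftrightarrow>
        (val (fst (CB i j)) ?M + val (snd (CB i j)) ?M) mod 2^?M = 0" for i j
    proof -
      have e0: "env a [] 0 = a" by (simp add: env_def)
      have "sat n ?J (ZF (fst (UVF s i j)) (snd (UVF s i j)) 1) (env a []) \<longleftrightarrow>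
          (\<forall>q<?M. (fst (CB i j) q \<noteq> snd (CB i j) q) = (\<exists>r<q. fst (CB i j) r \<or> snd (CB i j) r))"
        using sat_ZF[OF ok_UVF(1)[OF S, of A s i j] ok_UVF(2)[OF S, of A s i j], of 1 "env a []"] e0 a
        by (simp add: CB_def)
      also have "\<dots> \<longleftrightarrow> (val (fst (CB i j)) ?M + val (snd (CB i j)) ?M) mod 2^?M = 0"
        by (rule zero_test[symmetric])
      finally show ?thesis .
    qed
    then show ?thesis by simp
  qed
  also have "\<dots> \<longleftrightarrow> (\<forall>i j. i \<noteq> j \<longrightarrow> Dv (XI (flip I (s, a))) (monoms i j) = 0)"
  proof -
    have "(val (fst (CB i j)) ?M + val (snd (CB i j)) ?M) mod 2^?M = 0 \<longleftrightarrow> Dv (XI (flip I (s, a))) (monoms i j) = 0"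
      if ij: "i \<noteq> j" for i j
      using arith[OF ij] zero_from_mod[OF Dv_bound[OF S' n, of i j]] by auto
    then show ?thesis by simp
  qed
  also have "\<dots> \<longleftrightarrow> (\<forall>i j. Dv (XI (flip I (s, a))) (monoms i j) = 0)"
    using Dv_diag by metis
  also have "\<dots> \<longleftrightarrow> collinear_query n (fst (step n prog (I, A) (s, a)))"
    using collinear_iff_Dv fstst by metis
  finally show "[] \<in> ?A' 0 \<longleftrightarrow> collinear_query n (fst (step n prog (I, A) (s, a)))" .
qed


lemma run_snoc: "run n P (cs @ [c]) = step n P (run n P cs) c"
  by (simp add: run_def)

lemma val_false: "val (\<lambda>p. False) M = 0" by (simp add: val_def)

lemma inv_run:
  "(\<forall>c\<in>set cs. snd c < n) \<Longrightarrow> Inv n (run n (prog :: 'd::finite dynprog) cs)"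
proof (induction cs rule: rev_induct)
  case Nil
  have "bitsA n (\<lambda>_. {}) w i j = (\<lambda>p. False)" for w and i j :: 'd by (simp add: bitsA_def[abs_def])
  moreover have "XI (\<lambda>_. {}) = (\<lambda>c. 0)" by (simp add: XI_def[abs_def])
  ultimately show ?case by (simp add: run_def Inv_def val_false Dv_def monoms_def XI_def)
next
  case (snoc c cs)
  obtain I A where r: "run n prog cs = (I, A)" by (cases "run n prog cs")
  obtain s a where c: "c = (s, a)" by (cases c)
  have "Inv n (I, A)" using snoc r by simp
  moreover have "a < n" using snoc.prems c by simp
  ultimately show ?case using step_lemma(1) by (simp add: run_snoc r c)
qed

theorem lemma14:
  shows "in_DynFO_ar (collinear_query :: nat \<Rightarrow> 'd::finite input \<Rightarrow> bool)"
  unfolding in_DynFO_ar_def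
proof (intro exI conjI)
  show "wf_prog (prog :: 'd dynprog)" by (rule wf_prog)
  show "maintains (prog :: 'd dynprog) collinear_query"
    unfolding maintains_def
  proof (intro allI impI)
    fix n and cs :: "'d change list"
    assume h: "cs \<noteq> [] \<and> (\<forall>c\<in>set cs. snd c < n)"
    then obtain cs' c where cs: "cs = cs' @ [c]" by (metis rev_exhaust)
    obtain I A where r: "run n prog cs' = (I, A)" by (cases "run n prog cs'")
    obtain s a where c: "c = (s, a)" by (cases c)
    have "Inv n (I, A)" using inv_run[of cs' n] h r cs by simp
    moreover have "a < n" using h cs c by simp
    ultimately have "[] \<in> snd (step n prog (I, A) (s, a)) 0 \<longleftrightarrow> collinear_query n (fst (step n prog (I, A) (s, a)))"
      by (rule step_lemma(2))
    then show "[] \<in> snd (run n prog cs) 0 \<longleftrightarrow> collinear_query n (fst (run n prog cs))"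
      by (simp add: cs run_snoc r c)
  qed
qed

end
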